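(* Let $A=\langle a,b\mid\ \rangle$ and $B=\langle c,d\mid\ \rangle$ be free groups of rank two, $C\le A$ the subgroup generated by $\{a,\ a^{b^2}(a^b)^{-1}a\}$ and $D\le B$ the subgroup generated by $\{c^{-1},\ c^{d^2}(c^d)^{-1}c\}$. Then for every $\alpha\in C\setminus\{1\}$, $\mathrm{NSS}_A(\{\alpha\})\cap C=\mathrm{NSS}_C(\{\alpha\})$, and for every $\beta\in D\setminus\{1\}$, $\mathrm{NSS}_B(\{\beta\})\cap D=\mathrm{NSS}_D(\{\beta\})$.
   Context: Notation $x^y=y^{-1}xy$. For a subset $S$ of a group $H$, $\mathrm{NSS}_H(S)=\{s_1^{h_1}\cdots s_n^{h_n}: n\ge1,\ s_i\in S,\ h_i\in H\}$. *)

theory Defs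
  imports "HOL-Algebra.Group" "HOL-Algebra.Generated_Groups"
begin

(* Free group on a generator type 'g: elements are freely reduced words over
   letters (inverted?, generator); multiplication = concatenation followed by
   free reduction; identity = empty word. *)

type_synonym 'g letter = "bool \<times> 'g"

definition inv_letter :: "'g letter \<Rightarrow> 'g letter" where
  "inv_letter x = (\<not> fst x, snd x)"

fun reduced :: "'g letter list \<Rightarrow> bool" where
  "reduced [] = True"
| "reduced [x] = True"
| "reduced (x # y # xs) = (y \<noteq> inv_letter x \<and> reduced (y # xs))"

definition reduce :: "'g letter list \<Rightarrow> 'g letter list" where
  "reduce xs = foldr (\<lambda>x acc. case acc of [] \<Rightarrow> [x]
                     | y # ys \<Rightarrow> (if y = inv_letter x then ys else x # y # ys)) xs []"

definition free_group :: "('g letter list) monoid" where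
  "free_group = \<lparr> carrier = {w. reduced w}, mult = (\<lambda>x y. reduce (x @ y)), one = [] \<rparr>"

definition gen :: "'g \<Rightarrow> 'g letter list" where
  "gen g = [(False, g)]"

definition conjg :: "('a, 'b) monoid_scheme \<Rightarrow> 'a \<Rightarrow> 'a \<Rightarrow> 'a" where
  "conjg G x y = inv\<^bsub>G\<^esub> y \<otimes>\<^bsub>G\<^esub> x \<otimes>\<^bsub>G\<^esub> y"

fun mprod :: "('a, 'b) monoid_scheme \<Rightarrow> 'a list \<Rightarrow> 'a" where
  "mprod G [] = \<one>\<^bsub>G\<^esub>"
| "mprod G (x # xs) = x \<otimes>\<^bsub>G\<^esub> mprod G xs"

(* NSS_H(S) = { s_1^{h_1} ... s_n^{h_n} : n \<ge> 1, s_i \<in> S, h_i \<in> H },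
   computed in the ambient group G (H is a subgroup of G, given by its carrier) *)
definition NSS :: "('a, 'b) monoid_scheme \<Rightarrow> 'a set \<Rightarrow> 'a set \<Rightarrow> 'a set" where
  "NSS G H S = {mprod G (map (\<lambda>(s, h). conjg G s h) ps) | ps.
                  ps \<noteq> [] \<and> set ps \<subseteq> S \<times> H}"

datatype genAB = a | b
datatype genCD = c | d

abbreviation FA :: "genAB letter list monoid" where "FA \<equiv> free_group"
abbreviation FB :: "genCD letter list monoid" where "FB \<equiv> free_group"

definition subC :: "genAB letter list set" where
  "subC = generate FA {gen a,
      conjg FA (gen a) (gen b \<otimes>\<^bsub>FA\<^esub> gen b) \<otimes>\<^bsub>FA\<^esub> inv\<^bsub>FA\<^esub> (conjg FA (gen a) (gen b))
        \<otimes>\<^bsub>FA\<^esub> gen a}"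

definition subD :: "genCD letter list set" where
  "subD = generate FB {inv\<^bsub>FB\<^esub> (gen c),
      conjg FB (gen c) (gen d \<otimes>\<^bsub>FB\<^esub> gen d) \<otimes>\<^bsub>FB\<^esub> inv\<^bsub>FB\<^esub> (conjg FB (gen c) (gen d))
        \<otimes>\<^bsub>FB\<^esub> gen c}"

end

theory Submission imports Defs "HOL-Algebra.Elementary_Groups"
begin


definition step :: "'g letter \<Rightarrow> 'g letter list \<Rightarrow> 'g letter list" where
  "step x acc = (case acc of [] \<Rightarrow> [x] | y # ys \<Rightarrow> (if y = inv_letter x then ys else x # y # ys))"

lemma reduce_Nil[simp]: "reduce [] = []" by (simp add: reduce_def)
lemma reduce_Cons[simp]: "reduce (x # xs) = step x (reduce xs)"
  by (simp add: reduce_def step_def)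
lemma reduce_append: "reduce (xs @ ys) = foldr step xs (reduce ys)"
  by (induct xs) (auto simp: step_def)

lemma inv_inv_letter[simp]: "inv_letter (inv_letter x) = x"
  by (simp add: inv_letter_def)
lemma inv_letter_neq[simp]: "inv_letter x \<noteq> x" "x \<noteq> inv_letter x"
  by (auto simp: inv_letter_def prod_eq_iff)

lemma reduced_tl: "reduced (y # ys) \<Longrightarrow> reduced ys"
  by (cases ys) auto

lemma reduced_step: "reduced w \<Longrightarrow> reduced (step x w)"
  by (cases w) (auto simp: step_def dest: reduced_tl)

lemma reduced_reduce: "reduced (reduce xs)"
  by (induct xs) (auto intro: reduced_step)

lemma reduce_id: "reduced w \<Longrightarrow> reduce w = w"
  by (induct w rule: reduced.induct) (auto simp: step_def)

lemma step_step_inv: "reduced v \<Longrightarrow> step x (step (inv_letter x) v) = v"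
proof (cases v)
  case (Cons z zs)
  assume r: "reduced v"
  show ?thesis
  proof (cases "z = x")
    case True
    then show ?thesis using r Cons by (cases zs) (auto simp: step_def)
  next
    case False
    then show ?thesis using Cons by (auto simp: step_def)
  qed
qed (auto simp: step_def)

lemma reduce_step_app: "reduced w \<Longrightarrow> reduce (step x w @ ys) = step x (reduce (w @ ys))"
proof (cases w)
  case Nil then show ?thesis by (simp add: step_def)
next
  case (Cons y ws)
  assume r: "reduced w"
  show ?thesis
  proof (cases "y = inv_letter x")
    case True
    then have "step x w = ws" using Cons by (simp add: step_def)
    moreover have "step x (reduce (w @ ys)) = reduce (ws @ ys)"
      using Cons True step_step_inv[OF reduced_reduce] by simp
    ultimately show ?thesis by simp
  next
    case False then show ?thesis using Cons by (simp add: step_def)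
  qed
qed

lemma reduce_reduce_app: "reduce (reduce xs @ ys) = reduce (xs @ ys)"
  by (induct xs) (auto simp: reduce_step_app reduced_reduce)

lemma reduce_app_reduce: "reduce (xs @ reduce ys) = reduce (xs @ ys)"
  by (simp add: reduce_append reduce_id reduced_reduce)

definition winv :: "'g letter list \<Rightarrow> 'g letter list" where
  "winv w = rev (map inv_letter w)"

lemma reduce_cancel: "reduce (u @ [inv_letter x, x] @ v) = reduce (u @ v)"
proof -
  have "reduce ([inv_letter x, x] @ v) = reduce v"
    using step_step_inv[OF reduced_reduce, of "inv_letter x" v] by simp
  then show ?thesis by (metis reduce_append)
qed

lemma reduce_winv: "reduce (winv w @ w) = []"
proof (induct w)
  case (Cons x w)
  have "winv (x # w) @ x # w = winv w @ [inv_letter x, x] @ w" by (simp add: winv_def)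
  then show ?case using Cons reduce_cancel by metis
qed (simp add: winv_def)

lemma group_free_group: "group (free_group :: 'g letter list monoid)"
proof (rule groupI)
  fix x y z :: "'g letter list"
  show "x \<otimes>\<^bsub>free_group\<^esub> y \<in> carrier free_group"
    by (simp add: free_group_def reduced_reduce)
  show "x \<otimes>\<^bsub>free_group\<^esub> y \<otimes>\<^bsub>free_group\<^esub> z = x \<otimes>\<^bsub>free_group\<^esub> (y \<otimes>\<^bsub>free_group\<^esub> z)"
    by (simp add: free_group_def reduce_reduce_app reduce_app_reduce)
next
  show "\<one>\<^bsub>free_group\<^esub> \<in> carrier (free_group :: 'g letter list monoid)"
    by (simp add: free_group_def)
next
  fix x :: "'g letter list" assume "x \<in> carrier free_group"
  then show "\<one>\<^bsub>free_group\<^esub> \<otimes>\<^bsub>free_group\<^esub> x = x"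
    by (simp add: free_group_def reduce_id)
next
  fix x :: "'g letter list" assume x: "x \<in> carrier free_group"
  show "\<exists>y\<in>carrier free_group. y \<otimes>\<^bsub>free_group\<^esub> x = \<one>\<^bsub>free_group\<^esub>"
    using x by (intro bexI[of _ "reduce (winv x)"]) (auto simp: free_group_def reduce_winv reduced_reduce reduce_reduce_app)
qed



definition lval :: "('h,'c) monoid_scheme \<Rightarrow> ('g \<Rightarrow> 'h) \<Rightarrow> 'g letter \<Rightarrow> 'h" where
  "lval H f x = (if fst x then inv\<^bsub>H\<^esub> (f (snd x)) else f (snd x))"

definition ev :: "('h,'c) monoid_scheme \<Rightarrow> ('g \<Rightarrow> 'h) \<Rightarrow> 'g letter list \<Rightarrow> 'h" where
  "ev H f w = foldr (\<lambda>x acc. lval H f x \<otimes>\<^bsub>H\<^esub> acc) w \<one>\<^bsub>H\<^esub>"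

context group begin

lemma lval_closed: "(\<And>g. f g \<in> carrier G) \<Longrightarrow> lval G f x \<in> carrier G"
  by (simp add: lval_def)

lemma lval_inv: "(\<And>g. f g \<in> carrier G) \<Longrightarrow> lval G f (inv_letter x) = inv (lval G f x)"
  by (simp add: lval_def inv_letter_def)

lemma ev_Nil[simp]: "ev G f [] = \<one>" by (simp add: ev_def)
lemma ev_Cons[simp]: "ev G f (x # w) = lval G f x \<otimes> ev G f w" by (simp add: ev_def)

lemma ev_closed: "(\<And>g. f g \<in> carrier G) \<Longrightarrow> ev G f w \<in> carrier G"
  by (induct w) (auto intro: lval_closed)

lemma ev_append: "(\<And>g. f g \<in> carrier G) \<Longrightarrow> ev G f (u @ w) = ev G f u \<otimes> ev G f w"
  by (induct u) (auto simp: m_assoc ev_closed lval_closed)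

lemma ev_step: assumes f: "\<And>g. f g \<in> carrier G"
  shows "ev G f (step x w) = lval G f x \<otimes> ev G f w"
proof (cases w)
  case (Cons y ys)
  show ?thesis
  proof (cases "y = inv_letter x")
    case True
    have "lval G f x \<otimes> ev G f w = (lval G f x \<otimes> inv (lval G f x)) \<otimes> ev G f ys"
      using Cons True f by (simp add: lval_inv m_assoc[symmetric] lval_closed ev_closed)
    also have "\<dots> = ev G f ys" using f by (simp add: lval_closed ev_closed)
    finally show ?thesis using Cons True by (simp add: step_def)
  qed (use Cons in \<open>simp add: step_def\<close>)
qed (simp add: step_def)

lemma ev_reduce: "(\<And>g. f g \<in> carrier G) \<Longrightarrow> ev G f (reduce w) = ev G f w"
  by (induct w) (auto simp: ev_step)

lemma ev_hom: "(\<And>g. f g \<in> carrier G) \<Longrightarrow> ev G f \<in> hom free_group G"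
  by (rule homI) (auto simp: free_group_def ev_reduce ev_append ev_closed)

lemma ev_group_hom: "(\<And>g. f g \<in> carrier G) \<Longrightarrow> group_hom free_group G (ev G f)"
  by (simp add: group_hom_def group_hom_axioms_def ev_hom group_free_group is_group)

lemma ev_gen: "(\<And>g. f g \<in> carrier G) \<Longrightarrow> ev G f (gen g) = f g"
  by (simp add: gen_def lval_def)

end

definition Wr :: "('a,'b) monoid_scheme \<Rightarrow> (int \<times> (int \<Rightarrow> 'a)) monoid" where
  "Wr G = \<lparr>carrier = {p. \<forall>j. snd p j \<in> carrier G},
           mult = (\<lambda>p q. (fst p + fst q, \<lambda>j. snd p j \<otimes>\<^bsub>G\<^esub> snd q (j + fst p))),
           one = (0, \<lambda>j. \<one>\<^bsub>G\<^esub>)\<rparr>"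

lemma Wr_mult: "p \<otimes>\<^bsub>Wr G\<^esub> q = (fst p + fst q, \<lambda>j. snd p j \<otimes>\<^bsub>G\<^esub> snd q (j + fst p))"
  by (simp add: Wr_def)
lemma Wr_one: "\<one>\<^bsub>Wr G\<^esub> = (0, \<lambda>j. \<one>\<^bsub>G\<^esub>)" by (simp add: Wr_def)
lemma Wr_carrier: "p \<in> carrier (Wr G) \<longleftrightarrow> (\<forall>j. snd p j \<in> carrier G)" by (simp add: Wr_def)

lemma (in group) group_Wr: "group (Wr G)"
proof (rule groupI)
  fix x y z assume x: "x \<in> carrier (Wr G)" and y: "y \<in> carrier (Wr G)" and z: "z \<in> carrier (Wr G)"
  show "x \<otimes>\<^bsub>Wr G\<^esub> y \<in> carrier (Wr G)" using x y by (simp add: Wr_mult Wr_carrier)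
  show "x \<otimes>\<^bsub>Wr G\<^esub> y \<otimes>\<^bsub>Wr G\<^esub> z = x \<otimes>\<^bsub>Wr G\<^esub> (y \<otimes>\<^bsub>Wr G\<^esub> z)"
    using x y z by (simp add: Wr_mult Wr_carrier m_assoc ac_simps)
next
  show "\<one>\<^bsub>Wr G\<^esub> \<in> carrier (Wr G)" by (simp add: Wr_one Wr_carrier)
next
  fix x assume x: "x \<in> carrier (Wr G)"
  then show "\<one>\<^bsub>Wr G\<^esub> \<otimes>\<^bsub>Wr G\<^esub> x = x" by (simp add: Wr_one Wr_mult Wr_carrier)
  show "\<exists>y\<in>carrier (Wr G). y \<otimes>\<^bsub>Wr G\<^esub> x = \<one>\<^bsub>Wr G\<^esub>"
    using x by (intro bexI[of _ "(- fst x, \<lambda>j. inv (snd x (j - fst x)))"])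
      (auto simp: Wr_one Wr_mult Wr_carrier)
qed



context group begin

lemma Wr_inv: assumes "p \<in> carrier (Wr G)"
  shows "inv\<^bsub>Wr G\<^esub> p = (- fst p, \<lambda>j. inv (snd p (j - fst p)))"
  using assms by (intro group.inv_equality[OF group_Wr]) (auto simp: Wr_one Wr_mult Wr_carrier)

lemma Wr_conj0: assumes "\<forall>j. \<phi> j \<in> carrier G" "q \<in> carrier (Wr G)"
  shows "conjg (Wr G) (0, \<phi>) q = (0, \<lambda>j. conjg G (\<phi> (j - fst q)) (snd q (j - fst q)))"
  using assms by (simp add: conjg_def Wr_inv Wr_mult Wr_carrier)

lemma Wr_mult0: "(0, \<phi>) \<otimes>\<^bsub>Wr G\<^esub> (0, \<psi>) = (0, \<lambda>j. \<phi> j \<otimes> \<psi> j)"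
  by (simp add: Wr_mult)

lemma Wr_inv0: "\<forall>j. \<phi> j \<in> carrier G \<Longrightarrow> inv\<^bsub>Wr G\<^esub> (0, \<phi>) = (0, \<lambda>j. inv \<phi> j)"
  by (simp add: Wr_inv Wr_carrier)

lemma mprod_closed: "set l \<subseteq> carrier G \<Longrightarrow> mprod G l \<in> carrier G"
  by (induct l) auto

lemma mprod_Wr0: "(\<forall>g\<in>set gs. \<forall>j. g j \<in> carrier G) \<Longrightarrow>
   mprod (Wr G) (map (\<lambda>g. (0, g)) gs) = (0, \<lambda>j. mprod G (map (\<lambda>g. g j) gs))"
  by (induct gs) (auto simp: Wr_one Wr_mult)

lemma mprod_filter: "(\<forall>x\<in>set l. f x \<in> carrier G) \<Longrightarrow>
  mprod G (map (\<lambda>x. if P x then f x else \<one>) l) = mprod G (map f (filter P l))"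
proof (induct l)
  case (Cons a l)
  have "mprod G (map f (filter P l)) \<in> carrier G" using Cons by (intro mprod_closed) auto
  then show ?case using Cons by auto
qed simp

lemma cancel_mid: "g \<in> carrier G \<Longrightarrow> w \<in> carrier G \<Longrightarrow> g \<otimes> (inv g \<otimes> w) = w"
  by (simp add: m_assoc[symmetric])

lemma conjg_closed: "x \<in> carrier G \<Longrightarrow> y \<in> carrier G \<Longrightarrow> conjg G x y \<in> carrier G"
  by (simp add: conjg_def)

lemma conjg_one: "y \<in> carrier G \<Longrightarrow> conjg G \<one> y = \<one>"
  by (simp add: conjg_def)

lemma conjg_mult: "x \<in> carrier G \<Longrightarrow> y \<in> carrier G \<Longrightarrow> g \<in> carrier G \<Longrightarrow> h \<in> carrier G \<Longrightarrow>
  conjg G x (h \<otimes> g) = inv g \<otimes> conjg G x h \<otimes> g"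
  by (simp add: conjg_def inv_mult_group m_assoc)

lemma conjg_prod: "x \<in> carrier G \<Longrightarrow> y \<in> carrier G \<Longrightarrow> g \<in> carrier G \<Longrightarrow>
  conjg G (x \<otimes> y) g = conjg G x g \<otimes> conjg G y g"
  by (simp add: conjg_def m_assoc cancel_mid)

lemma mprod_conj_shift: assumes "set ps \<subseteq> carrier G \<times> carrier G" "g \<in> carrier G"
  shows "mprod G (map (\<lambda>(s, h). conjg G s (h \<otimes> g)) ps) = conjg G (mprod G (map (\<lambda>(s, h). conjg G s h) ps)) g"
  using assms(1)
proof (induct ps)
  case Nil then show ?case using assms(2) by (simp add: conjg_def)
next
  case (Cons p ps)
  obtain s h where p: "p = (s, h)" by (cases p)
  have cl: "mprod G (map (\<lambda>(s, h). conjg G s h) ps) \<in> carrier G"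
    using Cons by (intro mprod_closed) (auto intro: conjg_closed)
  have sh: "s \<in> carrier G" "h \<in> carrier G" using Cons p by auto
  have "conjg G (conjg G s h \<otimes> mprod G (map (\<lambda>(s, h). conjg G s h) ps)) g
      = conjg G (conjg G s h) g \<otimes> conjg G (mprod G (map (\<lambda>(s, h). conjg G s h) ps)) g"
    using sh cl assms(2) by (simp add: conjg_prod conjg_closed)
  also have "conjg G (conjg G s h) g = conjg G s (h \<otimes> g)"
    using sh assms(2) by (simp add: conjg_def inv_mult_group m_assoc)
  finally show ?case using Cons p by simp
qed

end

lemma (in group_hom) hom_mprod: "set l \<subseteq> carrier G \<Longrightarrow> h (mprod G l) = mprod H (map h l)"
  by (induct l) (auto simp: G.mprod_closed)

lemma (in group_hom) hom_conjg: "x \<in> carrier G \<Longrightarrow> y \<in> carrier G \<Longrightarrow> h (conjg G x y) = conjg H (h x) (h y)"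
  by (simp add: conjg_def)

lemma mprod_DirProd: assumes "group G" "group H"
  shows "mprod (G \<times>\<times> H) l = (mprod G (map fst l), mprod H (map snd l))"
  by (induct l) (auto simp: mult_DirProd')

lemma conjg_DirProd: assumes "group G" "group H" "x \<in> carrier G" "y \<in> carrier G" "n \<in> carrier H" "l \<in> carrier H"
  shows "conjg (G \<times>\<times> H) (x, n) (y, l) = (conjg G x y, conjg H n l)"
  using assms by (simp add: conjg_def inv_DirProd)

lemma mprod_int: "mprod integer_group l = sum_list l"
  by (induct l) auto



definition Pz :: "int \<Rightarrow> int \<Rightarrow> int \<Rightarrow> int" where
  "Pz m n j = (if j = 0 then m + n else if j = 1 then - n else if j = 2 then n else 0)"

lemma group_F: "group (free_group :: 'g letter list monoid)" by (rule group_free_group)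

locale twogen =
  fixes u v :: 'g
  assumes uv: "u \<noteq> v"
begin

abbreviation F :: "'g letter list monoid" where "F \<equiv> free_group"
abbreviation G0 where "G0 \<equiv> F \<times>\<times> integer_group"
abbreviation WW where "WW \<equiv> Wr G0"

interpretation F: group F by (rule group_free_group)

lemma G0_group: "group G0" by (simp add: DirProd_group group_free_group)
interpretation G0: group G0 by (rule G0_group)
interpretation WW: group WW by (rule G0.group_Wr)

definition "xg = gen u"
definition "bg = gen v"
definition "yy = conjg F xg (bg \<otimes>\<^bsub>F\<^esub> bg) \<otimes>\<^bsub>F\<^esub> inv\<^bsub>F\<^esub> (conjg F xg bg) \<otimes>\<^bsub>F\<^esub> xg"
definition "zz = yy \<otimes>\<^bsub>F\<^esub> inv\<^bsub>F\<^esub> xg"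
definition "Csub = generate F {xg, yy}"

lemma gen_carrier[simp]: "gen g \<in> carrier F" by (simp add: gen_def free_group_def)
lemma xg_c[simp]: "xg \<in> carrier F" by (simp add: xg_def)
lemma bg_c[simp]: "bg \<in> carrier F" by (simp add: bg_def)
lemma yy_c[simp]: "yy \<in> carrier F" by (simp add: yy_def conjg_def)
lemma zz_c[simp]: "zz \<in> carrier F" by (simp add: zz_def)

lemma Csub_sub: "subgroup Csub F"
  unfolding Csub_def by (rule F.generate_is_subgroup) simp

lemma Csub_carrier: "Csub \<subseteq> carrier F"
  using Csub_sub subgroup.subset by blast

lemma xg_C[simp]: "xg \<in> Csub" by (simp add: Csub_def generate.incl)
lemma yy_C[simp]: "yy \<in> Csub" by (simp add: Csub_def generate.incl)
lemma zz_C[simp]: "zz \<in> Csub"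
  unfolding zz_def using Csub_sub by (simp add: subgroup.m_closed subgroup.m_inv_closed)
lemma one_C[simp]: "\<one>\<^bsub>F\<^esub> \<in> Csub" using Csub_sub subgroup.one_closed by blast

definition Fpos :: "int \<Rightarrow> 'g letter list \<times> int" where
  "Fpos j = (if j = 0 then (xg, 1) else if j = -2 then (zz, 0) else (\<one>\<^bsub>F\<^esub>, 0))"

definition psig :: "'g \<Rightarrow> int \<times> (int \<Rightarrow> 'g letter list \<times> int)" where
  "psig g = (if g = u then (0, Fpos) else if g = v then (1, \<lambda>j. (\<one>\<^bsub>F\<^esub>, 0)) else \<one>\<^bsub>WW\<^esub>)"

definition "Psi = ev WW psig"

lemma Fpos_c[simp]: "fst (Fpos j) \<in> carrier F" by (simp add: Fpos_def)

lemma invG0: "fst p \<in> carrier F \<Longrightarrow> inv\<^bsub>G0\<^esub> p = (inv\<^bsub>F\<^esub> (fst p), - snd p)"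
  by (cases p) (simp add: group_free_group)

lemma psig_c: "psig g \<in> carrier WW"
  by (auto simp: psig_def Wr_carrier Wr_one mem_Times_iff)

lemma Psi_hom: "group_hom F WW Psi"
  unfolding Psi_def by (rule WW.ev_group_hom) (rule psig_c)
interpretation Psi: group_hom F WW Psi by (rule Psi_hom)

lemma Psi_xg: "Psi xg = (0, Fpos)"
  by (simp add: Psi_def xg_def WW.ev_gen[OF psig_c] psig_def)
lemma Psi_bg: "Psi bg = (1, \<lambda>j. (\<one>\<^bsub>F\<^esub>, 0))"
  using uv by (simp add: Psi_def bg_def WW.ev_gen[OF psig_c] psig_def)

lemma Psi_c: "Psi w \<in> carrier WW"
  unfolding Psi_def by (rule WW.ev_closed) (rule psig_c)

definition "inC p = (\<forall>j. fst (snd p j) \<in> Csub)"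

lemma psig_inC: "inC (psig g)"
  using uv by (auto simp: inC_def psig_def Fpos_def Wr_one)

lemma lval_inC: "inC (lval WW psig x)"
proof -
  have "inC (inv\<^bsub>WW\<^esub> (psig g))" for g
    using psig_inC[of g] psig_c[of g] Csub_sub
    by (auto simp: inC_def G0.Wr_inv Wr_carrier invG0 mem_Times_iff subgroup.m_inv_closed)
  then show ?thesis using psig_inC by (simp add: lval_def)
qed

lemma Psi_inC: "inC (Psi w)"
proof (induct w)
  case Nil then show ?case by (simp add: Psi_def inC_def Wr_one)
next
  case (Cons x w)
  have "Psi (x # w) = lval WW psig x \<otimes>\<^bsub>WW\<^esub> Psi w" by (simp add: Psi_def WW.ev_Cons)
  then show ?case using Cons lval_inC[of x] Csub_sub
    by (auto simp: inC_def Wr_mult mult_DirProd' intro: subgroup.m_closed)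
qed

end


context twogen begin

interpretation F: group F by (rule group_free_group)
interpretation G0: group G0 by (rule G0_group)
interpretation WW: group WW by (rule G0.group_Wr)
interpretation Psi: group_hom F WW Psi by (rule Psi_hom)

definition V :: "int \<Rightarrow> int \<Rightarrow> int \<Rightarrow> 'g letter list" where
  "V j m n = (if j = 1 then xg [^]\<^bsub>F\<^esub> (- n) else if j = 2 then xg [^]\<^bsub>F\<^esub> n
     else if j = -1 then zz [^]\<^bsub>F\<^esub> (- n) else if j = -2 then zz [^]\<^bsub>F\<^esub> (m + n) else \<one>\<^bsub>F\<^esub>)"

definition PhiC :: "'g letter list \<Rightarrow> int \<Rightarrow> int \<Rightarrow> int \<times> (int \<Rightarrow> 'g letter list \<times> int)" where
  "PhiC g m n = (0, \<lambda>j. (if j = 0 then g else V j m n, Pz m n j))"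

lemma V_c[simp]: "V j m n \<in> carrier F" by (simp add: V_def)
lemma V_00: "V j 0 0 = \<one>\<^bsub>F\<^esub>" by (simp add: V_def)
lemma V_mult: "V j m n \<otimes>\<^bsub>F\<^esub> V j m' n' = V j (m + m') (n + n')"
  by (simp add: V_def F.int_pow_mult[symmetric] ac_simps)
lemma V_inv: "inv\<^bsub>F\<^esub> (V j m n) = V j (- m) (- n)"
  by (simp add: V_def F.int_pow_neg[symmetric])

lemma conjg_G0_one: "fst p \<in> carrier F \<Longrightarrow> conjg G0 p (\<one>\<^bsub>F\<^esub>, 0) = p"
  by (cases p) (simp add: conjg_def invG0)

lemma Psi_bb: "Psi (bg \<otimes>\<^bsub>F\<^esub> bg) = (2, \<lambda>j. (\<one>\<^bsub>F\<^esub>, 0))"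
  by (simp add: Psi_bg Wr_mult)

lemma Psi_conj_x: "Psi (conjg F xg g) = (0, \<lambda>j. Fpos (j - 1))" if "Psi g = (1, \<lambda>j. (\<one>\<^bsub>F\<^esub>, 0))" "g \<in> carrier F"
  using that Psi_c[of g]
  by (simp add: Psi.hom_conjg Psi_xg G0.Wr_conj0 Wr_carrier mem_Times_iff conjg_G0_one)

lemma Psi_conj_x2: "Psi (conjg F xg g) = (0, \<lambda>j. Fpos (j - 2))" if "Psi g = (2, \<lambda>j. (\<one>\<^bsub>F\<^esub>, 0))" "g \<in> carrier F"
  using that Psi_c[of g]
  by (simp add: Psi.hom_conjg Psi_xg G0.Wr_conj0 Wr_carrier mem_Times_iff conjg_G0_one)

lemma Psi_yy_raw: "Psi yy = (0, \<lambda>j. Fpos (j - 2) \<otimes>\<^bsub>G0\<^esub> inv\<^bsub>G0\<^esub> (Fpos (j - 1)) \<otimes>\<^bsub>G0\<^esub> Fpos j)"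
proof -
  have a: "Psi (conjg F xg (bg \<otimes>\<^bsub>F\<^esub> bg)) = (0, \<lambda>j. Fpos (j - 2))"
    by (rule Psi_conj_x2) (auto simp: Psi_bb)
  have b: "Psi (conjg F xg bg) = (0, \<lambda>j. Fpos (j - 1))"
    by (rule Psi_conj_x) (auto simp: Psi_bg)
  have c: "conjg F xg (bg \<otimes>\<^bsub>F\<^esub> bg) \<in> carrier F" "conjg F xg bg \<in> carrier F"
    by (auto simp: conjg_def)
  show ?thesis
    unfolding yy_def using c
    by (simp add: a b Psi_xg G0.Wr_inv0 G0.Wr_mult0 mem_Times_iff)
qed

lemma Psi_yy: "Psi yy = PhiC yy 0 1"
proof -
  have "Fpos (j - 2) \<otimes>\<^bsub>G0\<^esub> inv\<^bsub>G0\<^esub> (Fpos (j - 1)) \<otimes>\<^bsub>G0\<^esub> Fpos j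
        = (if j = 0 then yy else V j 0 1, Pz 0 1 j)" for j
  proof -
    have "zz \<otimes>\<^bsub>F\<^esub> xg = yy" by (simp add: zz_def F.m_assoc)
    then show ?thesis
      by (auto simp: Fpos_def invG0 V_def Pz_def F.int_pow_neg)
  qed
  then show ?thesis by (simp add: Psi_yy_raw PhiC_def)
qed

lemma Psi_x: "Psi xg = PhiC xg 1 0"
  by (auto simp: Psi_xg PhiC_def Fpos_def V_def Pz_def)

lemma Psi_C: "g \<in> Csub \<Longrightarrow> \<exists>m n. Psi g = PhiC g m n"
  unfolding Csub_def
proof (induct g rule: generate.induct)
  case one
  then show ?case by (intro exI[of _ 0]) (auto simp: PhiC_def V_00 Pz_def Wr_one)
next
  case (incl h)
  then show ?case using Psi_x Psi_yy by auto
next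
  case (inv h)
  then obtain m n where mn: "Psi h = PhiC h m n" using Psi_x Psi_yy by auto
  have hc: "h \<in> carrier F" using inv by auto
  have "Psi (inv\<^bsub>F\<^esub> h) = inv\<^bsub>WW\<^esub> (Psi h)" using hc by simp
  also have "\<dots> = PhiC (inv\<^bsub>F\<^esub> h) (- m) (- n)"
    using hc by (auto simp: mn PhiC_def G0.Wr_inv0 mem_Times_iff invG0 V_inv Pz_def)
  finally show ?case by blast
next
  case (eng h1 h2)
  then obtain m1 n1 m2 n2 where mn: "Psi h1 = PhiC h1 m1 n1" "Psi h2 = PhiC h2 m2 n2" by blast
  have hc: "h1 \<in> carrier F" "h2 \<in> carrier F"
    using eng Csub_carrier unfolding Csub_def by auto
  have "Psi (h1 \<otimes>\<^bsub>F\<^esub> h2) = Psi h1 \<otimes>\<^bsub>WW\<^esub> Psi h2" using hc by simp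
  also have "\<dots> = PhiC (h1 \<otimes>\<^bsub>F\<^esub> h2) (m1 + m2) (n1 + n2)"
    by (auto simp: mn PhiC_def G0.Wr_mult0 V_mult Pz_def)
  finally show ?case by blast
qed

end


lemma cnt_formula: "sum_list (map (\<lambda>k. Pz m n (j - k)) ks) =
   (m + n) * int (count_list ks j) - n * int (count_list ks (j - 1)) + n * int (count_list ks (j - 2))"
  by (induct ks) (auto simp: Pz_def algebra_simps)

lemma arith_core:
  fixes ks :: "int list"
  assumes mn: "(m, n) \<noteq> (0, 0)"
    and S: "\<forall>j. sum_list (map (\<lambda>k. Pz m n (j - k)) ks) = Pz m' n' j"
    and k: "k \<in> set ks"
  shows "k = 0"
proof -
  define c where "c j = int (count_list ks j)" for j
  have cpos: "c j > 0 \<longleftrightarrow> j \<in> set ks" for j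
    using count_list_0_iff[of ks j] by (auto simp: c_def)
  have cnn: "c j \<ge> 0" for j by (simp add: c_def)
  have H: "(m + n) * c j - n * c (j - 1) + n * c (j - 2) = Pz m' n' j" for j
    using S cnt_formula[of m n j ks] by (simp add: c_def)
  have E0: "(m + n) * c j - n * c (j - 1) + n * c (j - 2) = 0" if "j \<noteq> 0" "j \<noteq> 1" "j \<noteq> 2" for j
    using H[of j] that by (simp add: Pz_def)
  have E12: "((m + n) * c 1 - n * c 0 + n * c (-1)) + ((m + n) * c 2 - n * c 1 + n * c 0) = 0"
    using H[of 1] H[of 2] by (simp add: Pz_def)
  show ?thesis
  proof (cases "n = 0")
    case True
    then have m: "m \<noteq> 0" using mn by auto
    have "m * (c 1 + c 2) = 0" using E12 True by (simp add: algebra_simps)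
    then have "c 1 + c 2 = 0" using m by simp
    then have c12: "c 1 = 0" "c 2 = 0" using cnn[of 1] cnn[of 2] by auto
    have "c k > 0" using k cpos by simp
    show ?thesis
    proof (rule ccontr)
      assume "k \<noteq> 0"
      then show False
        using E0[of k] c12 \<open>c k > 0\<close> m True by (cases "k = 1 \<or> k = 2") auto
    qed
  next
    case False
    have fin: "finite (set ks)" "set ks \<noteq> {}" using k by auto
    define K where "K = Max (set ks)"
    define L where "L = Min (set ks)"
    have KL: "L \<le> k" "k \<le> K" using k fin by (auto simp: K_def L_def)
    have cK: "c K > 0" using fin cpos K_def by simp
    have cL: "c L > 0" using fin cpos L_def by simp
    have cgt: "c j = 0" if "j > K" for j
      using that fin cpos[of j] cnn[of j] by (auto simp: K_def)
    have clt: "c j = 0" if "j < L" for j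
      using that fin cpos[of j] cnn[of j] by (auto simp: L_def)
    have "n * c K \<noteq> 0" using False cK by simp
    have K0: "K \<le> 0"
    proof (rule ccontr)
      assume "\<not> K \<le> 0"
      then have "(m + n) * c (K + 2) - n * c (K + 2 - 1) + n * c (K + 2 - 2) = 0" by (intro E0) auto
      moreover have "K + 2 - 1 = K + 1" "K + 2 - 2 = K" by auto
      ultimately show False using cgt[of "K + 1"] cgt[of "K + 2"] \<open>n * c K \<noteq> 0\<close> by simp
    qed
    show ?thesis
    proof (cases "m + n = 0")
      case False
      then have "(m + n) * c L \<noteq> 0" using cL by simp
      have "L \<ge> 0"
      proof (rule ccontr)
        assume "\<not> L \<ge> 0"
        then have "(m + n) * c L - n * c (L - 1) + n * c (L - 2) = 0" by (intro E0) auto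
        then show False using clt[of "L - 1"] clt[of "L - 2"] \<open>(m + n) * c L \<noteq> 0\<close> by simp
      qed
      then show ?thesis using KL K0 by simp
    next
      case True
      have "n * c L \<noteq> 0" using \<open>n \<noteq> 0\<close> cL by simp
      have L1: "L \<ge> -1"
      proof (rule ccontr)
        assume "\<not> L \<ge> -1"
        then have "(m + n) * c (L + 1) - n * c (L + 1 - 1) + n * c (L + 1 - 2) = 0" by (intro E0) auto
        moreover have "L + 1 - 1 = L" "L + 1 - 2 = L - 1" by auto
        ultimately show False using clt[of "L - 1"] True \<open>n * c L \<noteq> 0\<close> by simp
      qed
      show ?thesis
      proof (cases "L = -1")
        case True
        have "c 1 = 0" "c 2 = 0" using cgt K0 by auto
        then have "n * c (-1) = 0" using E12 \<open>m + n = 0\<close> by (simp add: algebra_simps)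
        then show ?thesis using cL True \<open>n \<noteq> 0\<close> by simp
      next
        case False
        then show ?thesis using L1 KL K0 by simp
      qed
    qed
  qed
qed



context twogen begin

interpretation F: group F by (rule group_free_group)
interpretation G0: group G0 by (rule G0_group)
interpretation WW: group WW by (rule G0.group_Wr)
interpretation Psi: group_hom F WW Psi by (rule Psi_hom)

lemma conjg_G0: "p \<in> carrier F \<Longrightarrow> q \<in> carrier F \<Longrightarrow> conjg G0 (p, n) (q, l) = (conjg F p q, n)"
  by (simp add: conjg_DirProd group_free_group conjg_def)

lemma Psi_prod:
  assumes ps: "set ps \<subseteq> {\<alpha>} \<times> carrier F" and al: "\<alpha> \<in> carrier F" and mn: "Psi \<alpha> = PhiC \<alpha> m n"
  shows "Psi (mprod F (map (\<lambda>(s, h). conjg F s h) ps)) =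
    (0, \<lambda>j. (mprod F (map (\<lambda>(s, h). conjg F (fst (snd (PhiC \<alpha> m n) (j - fst (Psi h))))
                                            (fst (snd (Psi h) (j - fst (Psi h))))) ps),
             sum_list (map (\<lambda>(s, h). Pz m n (j - fst (Psi h))) ps)))"
proof -
  define \<phi> where "\<phi> = snd (PhiC \<alpha> m n)"
  have phic: "fst (\<phi> j) \<in> carrier F" for j using al by (simp add: \<phi>_def PhiC_def)
  define gf where "gf h = (\<lambda>j. conjg G0 (\<phi> (j - fst (Psi h))) (snd (Psi h) (j - fst (Psi h))))" for h
  have Pc: "fst (snd (Psi h) j) \<in> carrier F" for h j using Psi_c[of h] by (auto simp: Wr_carrier mem_Times_iff)
  have Pa: "Psi \<alpha> = (0, \<phi>)" using mn by (simp add: \<phi>_def PhiC_def)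
  have L: "set (map (\<lambda>(s, h). conjg F s h) ps) \<subseteq> carrier F" using ps al by (auto intro!: F.conjg_closed)
  have "Psi (mprod F (map (\<lambda>(s, h). conjg F s h) ps)) = mprod WW (map Psi (map (\<lambda>(s, h). conjg F s h) ps))"
    using L by (rule Psi.hom_mprod)
  also have "map Psi (map (\<lambda>(s, h). conjg F s h) ps) = map (\<lambda>g. (0, g)) (map (\<lambda>(s, h). gf h) ps)"
  proof -
    have "Psi (conjg F s h) = (0, gf h)" if "(s, h) \<in> set ps" for s h
    proof -
      have sh: "s = \<alpha>" "h \<in> carrier F" using that ps by auto
      have "Psi (conjg F s h) = conjg WW (0, \<phi>) (Psi h)" using sh al Pa by (simp add: Psi.hom_conjg)
      also have "\<dots> = (0, gf h)" using Psi_c[of h] phic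
        by (subst G0.Wr_conj0) (auto simp: gf_def mem_Times_iff Wr_carrier)
      finally show ?thesis .
    qed
    then show ?thesis by (auto intro!: map_cong)
  qed
  also have "mprod WW (map (\<lambda>g. (0, g)) (map (\<lambda>(s, h). gf h) ps)) =
      (0, \<lambda>j. mprod G0 (map (\<lambda>g. g j) (map (\<lambda>(s, h). gf h) ps)))"
  proof (rule G0.mprod_Wr0, intro ballI allI)
    have phiG: "\<phi> j \<in> carrier G0" for j using phic[of j] by (simp add: mem_Times_iff)
    have PG: "snd (Psi h) j \<in> carrier G0" for h j using Pc[of h j] by (simp add: mem_Times_iff)
    fix g j assume "g \<in> set (map (\<lambda>(s, h). gf h) ps)"
    then obtain h where "g = gf h" by auto
    then show "g j \<in> carrier G0" unfolding gf_def by (simp only: G0.conjg_closed[OF phiG PG])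
  qed
  also have "(\<lambda>j. mprod G0 (map (\<lambda>g. g j) (map (\<lambda>(s, h). gf h) ps))) =
     (\<lambda>j. (mprod F (map (\<lambda>(s, h). conjg F (fst (\<phi> (j - fst (Psi h)))) (fst (snd (Psi h) (j - fst (Psi h))))) ps),
             sum_list (map (\<lambda>(s, h). Pz m n (j - fst (Psi h))) ps)))"
  proof
    fix j
    have gfj: "gf h j = (conjg F (fst (\<phi> (j - fst (Psi h)))) (fst (snd (Psi h) (j - fst (Psi h)))),
                         Pz m n (j - fst (Psi h)))" for h
      using conjg_G0[OF phic Pc, of "j - fst (Psi h)" "snd (\<phi> (j - fst (Psi h)))" h "j - fst (Psi h)"
                   "snd (snd (Psi h) (j - fst (Psi h)))"]
      by (simp add: gf_def \<phi>_def PhiC_def)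
    show "mprod G0 (map (\<lambda>g. g j) (map (\<lambda>(s, h). gf h) ps)) = (mprod F (map (\<lambda>(s, h). conjg F (fst (\<phi> (j - fst (Psi h)))) (fst (snd (Psi h) (j - fst (Psi h))))) ps),
             sum_list (map (\<lambda>(s, h). Pz m n (j - fst (Psi h))) ps))"
      by (simp add: mprod_DirProd group_free_group mprod_int gfj comp_def split_def)
  qed
  finally show ?thesis by (simp add: \<phi>_def)
qed

end


context twogen begin

interpretation F: group F by (rule group_free_group)
interpretation G0: group G0 by (rule G0_group)
interpretation WW: group WW by (rule G0.group_Wr)
interpretation Psi: group_hom F WW Psi by (rule Psi_hom)

definition "kk h = fst (Psi h)"
definition "cc h = fst (snd (Psi h) 0)"

lemma cc_C: "cc h \<in> Csub" using Psi_inC[of h] by (simp add: cc_def inC_def)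

lemma core2:
  assumes al: "\<alpha> \<in> Csub" and ps: "set ps \<subseteq> {\<alpha>} \<times> carrier F"
    and X: "mprod F (map (\<lambda>(s, h). conjg F s h) ps) \<in> Csub"
    and mn: "Psi \<alpha> = PhiC \<alpha> m n"
  shows "((m, n) \<noteq> (0, 0) \<longrightarrow> (\<forall>p\<in>set ps. kk (snd p) = 0)) \<and>
    mprod F (map (\<lambda>(s, h). conjg F s h) ps) =
      mprod F (map (\<lambda>p. conjg F \<alpha> (cc (snd p))) (filter (\<lambda>p. kk (snd p) = 0) ps))"
proof -
  define X where "X = mprod F (map (\<lambda>(s, h). conjg F s h) ps)"
  have alc: "\<alpha> \<in> carrier F" using al Csub_carrier by auto
  obtain m' n' where mn': "Psi X = PhiC X m' n'" using Psi_C X X_def by blast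
  note P = Psi_prod[OF ps alc mn, folded X_def, unfolded mn']
  have E: "(if j = 0 then X else V j m' n', Pz m' n' j) =
     (mprod F (map (\<lambda>(s, h). conjg F (fst (snd (PhiC \<alpha> m n) (j - fst (Psi h))))
                                            (fst (snd (Psi h) (j - fst (Psi h))))) ps),
             sum_list (map (\<lambda>(s, h). Pz m n (j - fst (Psi h))) ps))" for j
    using fun_cong[OF arg_cong[where f = snd, OF P], of j] by (simp add: PhiC_def)
  define ks where "ks = map (\<lambda>p. kk (snd p)) ps"
  have S: "\<forall>j. sum_list (map (\<lambda>k. Pz m n (j - k)) ks) = Pz m' n' j"
  proof
    fix j show "sum_list (map (\<lambda>k. Pz m n (j - k)) ks) = Pz m' n' j"
      using E[of j] by (simp add: ks_def kk_def comp_def split_def)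
  qed
  have allk: "(m, n) \<noteq> (0, 0) \<longrightarrow> (\<forall>p\<in>set ps. kk (snd p) = 0)"
    using arith_core[OF _ S] by (auto simp: ks_def)
  have X0: "X = mprod F (map (\<lambda>(s, h). conjg F (fst (snd (PhiC \<alpha> m n) (0 - fst (Psi h))))
                                            (fst (snd (Psi h) (0 - fst (Psi h))))) ps)"
    using E[of 0] by simp
  also have "\<dots> = mprod F (map (\<lambda>p. if kk (snd p) = 0 then conjg F \<alpha> (cc (snd p)) else \<one>\<^bsub>F\<^esub>) ps)"
  proof (rule arg_cong[where f = "mprod F"], rule map_cong[OF refl])
    fix p assume p: "p \<in> set ps"
    obtain s h where sh: "p = (s, h)" by (cases p)
    have hc: "fst (snd (Psi h) j) \<in> carrier F" for j
      using Psi_c[of h] by (auto simp: Wr_carrier mem_Times_iff)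
    show "(case p of (s, h) \<Rightarrow> conjg F (fst (snd (PhiC \<alpha> m n) (0 - fst (Psi h)))) (fst (snd (Psi h) (0 - fst (Psi h)))))
        = (if kk (snd p) = 0 then conjg F \<alpha> (cc (snd p)) else \<one>\<^bsub>F\<^esub>)"
    proof (cases "kk h = 0")
      case True then show ?thesis by (simp add: sh kk_def cc_def PhiC_def)
    next
      case False
      then have "(m, n) = (0, 0)" using allk p sh by auto
      then show ?thesis using False hc by (simp add: sh kk_def PhiC_def V_00 F.conjg_one)
    qed
  qed
  also have "\<dots> = mprod F (map (\<lambda>p. conjg F \<alpha> (cc (snd p))) (filter (\<lambda>p. kk (snd p) = 0) ps))"
    by (rule F.mprod_filter) (use alc cc_C Csub_carrier in \<open>auto intro!: F.conjg_closed\<close>)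
  finally show ?thesis using allk X_def by simp
qed

lemma nss_of:
  assumes "L \<noteq> []"
  shows "mprod F (map (\<lambda>p. conjg F \<alpha> (cc (snd p))) L) \<in> NSS F Csub {\<alpha>}"
  unfolding NSS_def
  by (rule CollectI, rule exI[of _ "map (\<lambda>p. (\<alpha>, cc (snd p))) L"]) (use assms cc_C in \<open>auto simp: comp_def\<close>)

lemma mprod_C: "\<alpha> \<in> Csub \<Longrightarrow> set ps \<subseteq> {\<alpha>} \<times> Csub \<Longrightarrow> mprod F (map (\<lambda>(s, h). conjg F s h) ps) \<in> Csub"
proof (induct ps)
  case Nil then show ?case by simp
next
  case (Cons p ps)
  then show ?case using Csub_sub
    by (auto simp: conjg_def intro!: subgroup.m_closed subgroup.m_inv_closed)
qed

theorem main_C: "\<alpha> \<in> Csub \<Longrightarrow> NSS F (carrier F) {\<alpha>} \<inter> Csub = NSS F Csub {\<alpha>}"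
proof
  assume al: "\<alpha> \<in> Csub"
  have alc: "\<alpha> \<in> carrier F" using al Csub_carrier by auto
  obtain m n where mn: "Psi \<alpha> = PhiC \<alpha> m n" using Psi_C al by blast
  show "NSS F Csub {\<alpha>} \<subseteq> NSS F (carrier F) {\<alpha>} \<inter> Csub"
  proof
    fix X assume "X \<in> NSS F Csub {\<alpha>}"
    then obtain ps where ps: "X = mprod F (map (\<lambda>(s, h). conjg F s h) ps)" "ps \<noteq> []" "set ps \<subseteq> {\<alpha>} \<times> Csub"
      by (auto simp: NSS_def)
    have "set ps \<subseteq> {\<alpha>} \<times> carrier F" using ps Csub_carrier by auto
    then have "X \<in> NSS F (carrier F) {\<alpha>}" using ps by (auto simp: NSS_def)
    moreover have "X \<in> Csub" using ps mprod_C al by simp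
    ultimately show "X \<in> NSS F (carrier F) {\<alpha>} \<inter> Csub" by simp
  qed
  show "NSS F (carrier F) {\<alpha>} \<inter> Csub \<subseteq> NSS F Csub {\<alpha>}"
  proof
    fix X assume XX: "X \<in> NSS F (carrier F) {\<alpha>} \<inter> Csub"
    then obtain ps where ps: "X = mprod F (map (\<lambda>(s, h). conjg F s h) ps)" "ps \<noteq> []" "set ps \<subseteq> {\<alpha>} \<times> carrier F"
      by (auto simp: NSS_def)
    have XC: "X \<in> Csub" using XX by simp
    note C2 = core2[OF al ps(3) XC[unfolded ps(1)] mn]
    show "X \<in> NSS F Csub {\<alpha>}"
    proof (cases "filter (\<lambda>p. kk (snd p) = 0) ps = []")
      case False
      then show ?thesis using C2 ps(1) nss_of by simp
    next
      case True
      then have mn0: "(m, n) = (0, 0)" using C2 ps(2) by (cases ps) auto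
      then have X1: "X = \<one>\<^bsub>F\<^esub>" using C2 True ps(1) by simp
      obtain s1 h1 ps' where ps1: "ps = (s1, h1) # ps'" using ps(2) by (cases ps) auto
      have h1: "h1 \<in> carrier F" using ps(3) ps1 by auto
      define qs where "qs = map (\<lambda>(s, h). (s, h \<otimes>\<^bsub>F\<^esub> inv\<^bsub>F\<^esub> h1)) ps"
      have qs_c: "set qs \<subseteq> {\<alpha>} \<times> carrier F" using ps(3) h1 by (auto simp: qs_def)
      have "mprod F (map (\<lambda>(s, h). conjg F s h) qs) =
          mprod F (map (\<lambda>(s, h). conjg F s (h \<otimes>\<^bsub>F\<^esub> inv\<^bsub>F\<^esub> h1)) ps)"
        by (simp add: qs_def comp_def split_def)
      also have "\<dots> = conjg F X (inv\<^bsub>F\<^esub> h1)"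
        using F.mprod_conj_shift[of ps "inv\<^bsub>F\<^esub> h1"] ps(3) alc h1 ps(1) by auto
      also have "\<dots> = \<one>\<^bsub>F\<^esub>" using X1 h1 by (simp add: F.conjg_one)
      finally have Q1: "mprod F (map (\<lambda>(s, h). conjg F s h) qs) = \<one>\<^bsub>F\<^esub>" .
      note C3 = core2[OF al qs_c _ mn, unfolded Q1]
      have k0: "kk (h1 \<otimes>\<^bsub>F\<^esub> inv\<^bsub>F\<^esub> h1) = 0" using h1 by (simp add: kk_def Wr_one)
      have "filter (\<lambda>p. kk (snd p) = 0) qs \<noteq> []" using k0 by (simp add: qs_def ps1)
      then show ?thesis using C3 X1 nss_of by simp
    qed
  qed
qed

end


lemma (in group) generate_inv_swap:
  assumes "x \<in> carrier G" "y \<in> carrier G"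
  shows "generate G {inv x, y} = generate G {x, y}"
proof
  show "generate G {inv x, y} \<subseteq> generate G {x, y}"
  proof (intro generate_subgroup_incl)
    show "subgroup (generate G {x, y}) G" using assms by (intro generate_is_subgroup) auto
    have "inv x \<in> generate G {x, y}"
      using assms by (rule_tac generate_m_inv_closed) (auto intro: generate.incl)
    then show "{inv x, y} \<subseteq> generate G {x, y}" by (auto intro: generate.incl)
  qed
  show "generate G {x, y} \<subseteq> generate G {inv x, y}"
  proof (intro generate_subgroup_incl)
    show "subgroup (generate G {inv x, y}) G" using assms by (intro generate_is_subgroup) auto
    have "inv (inv x) \<in> generate G {inv x, y}"
      using assms by (rule_tac generate_m_inv_closed) (auto intro: generate.incl)
    then have "x \<in> generate G {inv x, y}" using assms by (simp add: inv_inv)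
    then show "{x, y} \<subseteq> generate G {inv x, y}" using assms by (auto intro: generate.incl)
  qed
qed

interpretation AB: twogen a b by unfold_locales simp
interpretation CD: twogen c d by unfold_locales simp

theorem mainTheorem20:
  shows "(\<forall>\<alpha> \<in> subC - {\<one>\<^bsub>FA\<^esub>}. NSS FA (carrier FA) {\<alpha>} \<inter> subC = NSS FA subC {\<alpha>})
       \<and> (\<forall>\<beta> \<in> subD - {\<one>\<^bsub>FB\<^esub>}. NSS FB (carrier FB) {\<beta>} \<inter> subD = NSS FB subD {\<beta>})"
proof -
  have C: "subC = AB.Csub"
    by (simp add: subC_def AB.Csub_def AB.xg_def AB.yy_def AB.bg_def)
  have D: "subD = CD.Csub"
    unfolding subD_def CD.Csub_def CD.yy_def CD.xg_def CD.bg_def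
    by (rule group.generate_inv_swap[OF group_free_group], simp, use CD.yy_c in \<open>simp add: CD.yy_def CD.xg_def CD.bg_def\<close>)
  show ?thesis using AB.main_C CD.main_C C D by auto
qed



end
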